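(* Let $Q$ be a QNP and let $\pi$ be a policy for $Q$. A sequence $\bar\tau=\bar s_0,\bar s_1,\dots$ is an infinite non-terminating $\pi$-trajectory of the FOND problem $P=T_D(Q)$ if and only if there is an infinite $\pi$-trajectory $\tau=s_0,s_1,\dots$ of $Q$ (an $\epsilon$-trajectory for some $\epsilon>0$) such that $\bar s_i$ is the boolean state of $s_i$ for every $i$.
   Context: A qualitative numerical problem (QNP) is a tuple $Q=\langle F,V,I,O,G\rangle$ where $F$ is a finite set of propositional variables and $V$ a finite set of numerical variables taking non-negative real values. $F$-literals are $p,\neg p$; $V$-literals are $X=0$ and $X>0$. $I$ and $G$ are consistent sets of literals. Each action $a\in O$ has a precondition $Pre(a)$ (set of $F$- and $V$-literals), propositional effects $\mathit{Eff}(a)$ (set of $F$-literals) and numerical effects $N(a)$ (atoms $Inc(X)$, $Dec(X)$, at most one per variable); if $Dec(X)\in N(a)$ then $X>0\in Pre(a)$. A state $s$ assigns truth values to $F$ and reals $s[X]\ge 0$ to $V$. Initial states satisfy $I$ under a closed-world assumption. $a$ is applicable in $s$ if $s$ satisfies $Pre(a)$. For applicable $a$, $s'\in F(a,s)$ iff the propositional effects are applied (others unchanged), $s'[X]>s[X]$ if $Inc(X)\in N(a)$, $s'[X]<s[X]$ if $Dec(X)\in N(a)$, $s'[X]=s[X]$ otherwise. A trajectory is a sequence $s_0,a_0,s_1,\dots$ with $s_0$ initial, $a_i$ applicable in $s_i$, $s_{i+1}\in F(a_i,s_i)$; for $\epsilon>0$ it is an $\epsilon$-trajectory if for all $X,i$: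 $s_{i+1}[X]\neq s_i[X]$ implies $|s_{i+1}[X]-s_i[X]|\ge\epsilon$ or $0=s_{i+1}[X]<s_i[X]<\epsilon$. The boolean state $\bar s$ of $s$ is its truth valuation on the atoms $p\in F$ and $X=0$. A policy is a partial map $\pi$ from states to actions with $\pi(s)=\pi(s')$ whenever $\bar s=\bar s'$; a $\pi$-trajectory has $a_i=\pi(s_i)$. The direct translation $T_D(Q)$ is the FOND problem over $F\cup\{p_{X=0}:X\in V\}$ obtained by reading $X=0$ as $p_{X=0}$ and $X>0$ as $\neg p_{X=0}$ in $I$, $G$, preconditions, keeping propositional effects, replacing $Inc(X)$ by the deterministic effect $\neg p_{X=0}$ and $Dec(X)$ by the nondeterministic effect $\neg p_{X=0}\mid p_{X=0}$. Its states are the boolean states of $Q$, its unique initial state is the common boolean state of the initial states of $Q$, and $\pi$ acts on it via $\bar s\mapsto \pi(s)$. A $\pi$-trajectory of $T_D(Q)$ is a sequence $\bar s_0,\bar s_1,\dots$ from the initial state with $\pi(\bar s_i)$ applicable and $\bar s_{i+1}$ a possible successor. An action of $T_D(Q)$ is a $Dec(X)$ (resp. $Inc(X)$) action if the corresponding action of $Q$ has $Dec(X)$ (resp. $Inc(X)$) in $N(a)$. For an infinite $\pi$-trajectory of $T_D(Q)$, the recurrent states are those occurring infinitely often; the trajectory is terminating if there is $X\in V$ such that $\pi(\bar s)$ is a $Dec(X)$ action for some recurrent $\bar s$ and $\pi(\bar s')$ is not an $Inc(X)$ action for any recurrent $\bar s'$; otherwise it is non-terminating. *)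

theory Defs
  imports Main "HOL.Real"
begin

datatype ('f, 'v) lit = PosL 'f | NegL 'f | ZeroL 'v | GtZeroL 'v

datatype neffect = Inc | Dec

(* Action: precondition (F- and V-literals), propositional effects (F-literals,
   (p,True) for p, (p,False) for \<not>p), numerical effects (at most one per
   variable, hence a partial function). *)
datatype ('f, 'v) action =
  Action (pre: "('f, 'v) lit set") (eff: "('f \<times> bool) set") (neff: "'v \<Rightarrow> neffect option")

(* QNP <F, V, I, O, G> with F = UNIV::'f set, V = UNIV::'v set *)
datatype ('f, 'v) qnp =
  QNP (init: "('f, 'v) lit set") (ops: "('f, 'v) action set") (goal: "('f, 'v) lit set")

definition consistent_lits :: "('f, 'v) lit set \<Rightarrow> bool" where
  "consistent_lits L \<longleftrightarrow> (\<forall>p. \<not> (PosL p \<in> L \<and> NegL p \<in> L)) \<and> (\<forall>X. \<not> (ZeroL X \<in> L \<and> GtZeroL X \<in> L))"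

definition wf_qnp :: "('f::finite, 'v::finite) qnp \<Rightarrow> bool" where
  "wf_qnp Q \<longleftrightarrow> consistent_lits (init Q) \<and> consistent_lits (goal Q) \<and> finite (ops Q) \<and>
     (\<forall>a\<in>ops Q. \<forall>X. neff a X = Some Dec \<longrightarrow> GtZeroL X \<in> pre a)"

type_synonym ('f, 'v) state = "('f \<Rightarrow> bool) \<times> ('v \<Rightarrow> real)"

definition valid_state :: "('f, 'v) state \<Rightarrow> bool" where
  "valid_state s \<longleftrightarrow> (\<forall>X. snd s X \<ge> 0)"

(* boolean states: truth values of the atoms p and X = 0 *)
type_synonym ('f, 'v) bstate = "('f \<Rightarrow> bool) \<times> ('v \<Rightarrow> bool)"

definition bool_state :: "('f, 'v) state \<Rightarrow> ('f, 'v) bstate" where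
  "bool_state s = (fst s, \<lambda>X. snd s X = 0)"

fun holds_lit :: "('f, 'v) bstate \<Rightarrow> ('f, 'v) lit \<Rightarrow> bool" where
  "holds_lit b (PosL p) = fst b p"
| "holds_lit b (NegL p) = (\<not> fst b p)"
| "holds_lit b (ZeroL X) = snd b X"
| "holds_lit b (GtZeroL X) = (\<not> snd b X)"

definition holds_lits :: "('f, 'v) bstate \<Rightarrow> ('f, 'v) lit set \<Rightarrow> bool" where
  "holds_lits b L \<longleftrightarrow> (\<forall>l\<in>L. holds_lit b l)"

(* common boolean state of the initial states: I under the closed-world assumption
   (an atom p, resp. X = 0, is true iff the literal p, resp. X = 0, is in I) *)
definition init_bstate :: "('f, 'v) qnp \<Rightarrow> ('f, 'v) bstate" where
  "init_bstate Q = (\<lambda>p. PosL p \<in> init Q, \<lambda>X. ZeroL X \<in> init Q)"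

definition initial_state :: "('f, 'v) qnp \<Rightarrow> ('f, 'v) state \<Rightarrow> bool" where
  "initial_state Q s \<longleftrightarrow> valid_state s \<and> bool_state s = init_bstate Q"

definition apply_eff :: "('f \<times> bool) set \<Rightarrow> ('f \<Rightarrow> bool) \<Rightarrow> ('f \<Rightarrow> bool)" where
  "apply_eff E v = (\<lambda>p. if (p, True) \<in> E then True else if (p, False) \<in> E then False else v p)"

definition applicable :: "('f, 'v) action \<Rightarrow> ('f, 'v) state \<Rightarrow> bool" where
  "applicable a s \<longleftrightarrow> holds_lits (bool_state s) (pre a)"

definition succ_Q :: "('f, 'v) action \<Rightarrow> ('f, 'v) state \<Rightarrow> ('f, 'v) state \<Rightarrow> bool" where
  "succ_Q a s s' \<longleftrightarrow> valid_state s' \<and> fst s' = apply_eff (eff a) (fst s) \<and>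
     (\<forall>X. (neff a X = Some Inc \<longrightarrow> snd s' X > snd s X) \<and>
          (neff a X = Some Dec \<longrightarrow> snd s' X < snd s X) \<and>
          (neff a X = None \<longrightarrow> snd s' X = snd s X))"

definition is_policy :: "('f, 'v) qnp \<Rightarrow> (('f, 'v) state \<Rightarrow> ('f, 'v) action option) \<Rightarrow> bool" where
  "is_policy Q \<pi> \<longleftrightarrow> (\<forall>s a. valid_state s \<longrightarrow> \<pi> s = Some a \<longrightarrow> a \<in> ops Q) \<and>
     (\<forall>s s'. valid_state s \<longrightarrow> valid_state s' \<longrightarrow> bool_state s = bool_state s' \<longrightarrow> \<pi> s = \<pi> s')"

definition traj_Q :: "('f, 'v) qnp \<Rightarrow> (('f, 'v) state \<Rightarrow> ('f, 'v) action option) \<Rightarrow> (nat \<Rightarrow> ('f, 'v) state) \<Rightarrow> bool" where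
  "traj_Q Q \<pi> s \<longleftrightarrow> initial_state Q (s 0) \<and>
     (\<forall>i. \<exists>a. \<pi> (s i) = Some a \<and> applicable a (s i) \<and> succ_Q a (s i) (s (Suc i)))"

definition eps_traj :: "real \<Rightarrow> (nat \<Rightarrow> ('f, 'v) state) \<Rightarrow> bool" where
  "eps_traj \<epsilon> s \<longleftrightarrow> (\<forall>X i. snd (s (Suc i)) X \<noteq> snd (s i) X \<longrightarrow>
      \<bar>snd (s (Suc i)) X - snd (s i) X\<bar> \<ge> \<epsilon> \<or>
      (0 = snd (s (Suc i)) X \<and> snd (s (Suc i)) X < snd (s i) X \<and> snd (s i) X < \<epsilon>))"

definition bpolicy :: "(('f, 'v) state \<Rightarrow> ('f, 'v) action option) \<Rightarrow> ('f, 'v) bstate \<Rightarrow> ('f, 'v) action option" where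
  "bpolicy \<pi> b = \<pi> (SOME s. valid_state s \<and> bool_state s = b)"

definition succ_D :: "('f, 'v) action \<Rightarrow> ('f, 'v) bstate \<Rightarrow> ('f, 'v) bstate \<Rightarrow> bool" where
  "succ_D a b b' \<longleftrightarrow> fst b' = apply_eff (eff a) (fst b) \<and>
     (\<forall>X. (neff a X = Some Inc \<longrightarrow> \<not> snd b' X) \<and>
          (neff a X = None \<longrightarrow> snd b' X = snd b X))"

definition traj_D :: "('f, 'v) qnp \<Rightarrow> (('f, 'v) state \<Rightarrow> ('f, 'v) action option) \<Rightarrow> (nat \<Rightarrow> ('f, 'v) bstate) \<Rightarrow> bool" where
  "traj_D Q \<pi> bs \<longleftrightarrow> bs 0 = init_bstate Q \<and>
     (\<forall>i. \<exists>a. bpolicy \<pi> (bs i) = Some a \<and> holds_lits (bs i) (pre a) \<and> succ_D a (bs i) (bs (Suc i)))"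

definition recurrent :: "(nat \<Rightarrow> ('f, 'v) bstate) \<Rightarrow> ('f, 'v) bstate \<Rightarrow> bool" where
  "recurrent bs b \<longleftrightarrow> infinite {i. bs i = b}"

definition terminating_D :: "(('f, 'v) state \<Rightarrow> ('f, 'v) action option) \<Rightarrow> (nat \<Rightarrow> ('f, 'v) bstate) \<Rightarrow> bool" where
  "terminating_D \<pi> bs \<longleftrightarrow> (\<exists>X.
     (\<exists>b. recurrent bs b \<and> (\<exists>a. bpolicy \<pi> b = Some a \<and> neff a X = Some Dec)) \<and>
     (\<forall>b'. recurrent bs b' \<longrightarrow> \<not> (\<exists>a. bpolicy \<pi> b' = Some a \<and> neff a X = Some Inc)))"

end

theory Submission
  imports Defs "HOL-Library.Infinite_Set"
begin

primrec vv :: "(nat \<Rightarrow> bool) \<Rightarrow> (nat \<Rightarrow> bool) \<Rightarrow> (nat \<Rightarrow> bool) \<Rightarrow> (nat \<Rightarrow> nat) \<Rightarrow> nat \<Rightarrow> nat" where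
  "vv Z I D d 0 = (if Z 0 then 0 else Suc (d 0))"
| "vv Z I D d (Suc i) = (if Z (Suc i) then 0 else if I i then vv Z I D d i + Suc (d (Suc i))
     else if D i then vv Z I D d i - 1 else vv Z I D d i)"

lemma abstract_values:
  fixes Z I D :: "nat \<Rightarrow> bool"
  assumes h1: "\<And>i. \<not> (I i \<and> D i)"
    and h2: "\<And>i. D i \<Longrightarrow> \<not> Z i"
    and h3: "\<And>i. I i \<Longrightarrow> \<not> Z (Suc i)"
    and h4: "\<And>i. \<not> I i \<Longrightarrow> \<not> D i \<Longrightarrow> Z (Suc i) = Z i"
    and h5: "\<And>i. infinite {k. D k} \<Longrightarrow> \<exists>j\<ge>i. I j"
  shows "\<exists>v::nat\<Rightarrow>nat. \<forall>i. (v i = 0 \<longleftrightarrow> Z i) \<and> (I i \<longrightarrow> v i < v (Suc i)) \<and>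
           (D i \<longrightarrow> v (Suc i) < v i) \<and> (\<not> I i \<and> \<not> D i \<longrightarrow> v (Suc i) = v i)"
proof -
  define good where "good i k \<longleftrightarrow> i \<le> k \<and> (\<forall>j. i \<le> j \<and> j \<le> k \<longrightarrow> \<not> Z j \<and> \<not> I j)" for i k
  define G where "G i = {k. good i k \<and> D k}" for i
  define d where "d i = card (G i)" for i
  have finG: "finite (G i)" for i
  proof (rule ccontr)
    assume inf: "infinite (G i)"
    have "infinite {k. D k}"
      using inf by (rule infinite_super[rotated]) (auto simp: G_def)
    then obtain j where j: "j \<ge> i" "I j" using h5 by blast
    obtain k where "k \<ge> j" "k \<in> G i" using inf unfolding infinite_nat_iff_unbounded_le by blast
    then show False using j by (auto simp: G_def good_def)
  qed
  have Gstep: "G i = (if D i then insert i (G (Suc i)) else G (Suc i))" if "\<not> Z i" "\<not> I i" for i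
  proof -
    have "good i k \<longleftrightarrow> k = i \<or> good (Suc i) k" for k
      using that unfolding good_def
      by (metis Suc_leI le_antisym le_trans nat_le_linear not_less_eq_eq order_refl)
    then show ?thesis by (auto simp: G_def)
  qed
  have dD: "d i = Suc (d (Suc i))" if "\<not> Z i" "\<not> I i" "D i" for i
  proof -
    have "i \<notin> G (Suc i)" by (auto simp: G_def good_def)
    then show ?thesis using Gstep[OF that(1,2)] that(3) finG by (simp add: d_def)
  qed
  have dN: "d i = d (Suc i)" if "\<not> Z i" "\<not> I i" "\<not> D i" for i
    using Gstep[OF that(1,2)] that(3) by (simp add: d_def)
  let ?v = "vv Z I D d"
  have inv: "(Z i \<longrightarrow> ?v i = 0) \<and> (\<not> Z i \<longrightarrow> ?v i \<ge> Suc (d i))" for i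
  proof (induction i)
    case 0 then show ?case by simp
  next
    case (Suc i)
    show ?case
    proof (cases "Z (Suc i)")
      case True then show ?thesis by simp
    next
      case F: False
      show ?thesis
      proof (cases "I i")
        case True then show ?thesis using F by simp
      next
        case nI: False
        show ?thesis
        proof (cases "D i")
          case True
          then show ?thesis using F nI Suc h2[of i] dD[of i] by auto
        next
          case False
          then show ?thesis using F nI Suc h4[of i] dN[of i] by auto
        qed
      qed
    qed
  qed
  show ?thesis
  proof (intro exI allI conjI impI)
    fix i
    show "(?v i = 0) = Z i" using inv[of i] by auto
    show "I i \<Longrightarrow> ?v i < ?v (Suc i)" using h3[of i] by simp
    show "D i \<Longrightarrow> ?v (Suc i) < ?v i" using h1[of i] h2[of i] inv[of i] by auto
    show "\<not> I i \<and> \<not> D i \<Longrightarrow> ?v (Suc i) = ?v i" using h4[of i] inv[of i] inv[of "Suc i"] by auto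
  qed
qed

lemma ex_state: "\<exists>s. valid_state s \<and> bool_state s = b"
  by (rule exI[of _ "(fst b, \<lambda>X. if snd b X then 0 else 1)"])
     (auto simp: valid_state_def bool_state_def)

lemma bpolicy_eq:
  assumes "is_policy Q \<pi>" "valid_state s"
  shows "bpolicy \<pi> (bool_state s) = \<pi> s"
proof -
  let ?t = "SOME t. valid_state t \<and> bool_state t = bool_state s"
  have "valid_state ?t \<and> bool_state ?t = bool_state s"
    by (rule someI_ex) (use ex_state in blast)
  then have "\<pi> ?t = \<pi> s" using assms unfolding is_policy_def by blast
  then show ?thesis unfolding bpolicy_def .
qed

lemma bpolicy_ops:
  assumes "is_policy Q \<pi>" "bpolicy \<pi> b = Some a"
  shows "a \<in> ops Q"
proof -
  let ?t = "SOME t. valid_state t \<and> bool_state t = b"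
  have "valid_state ?t \<and> bool_state ?t = b"
    by (rule someI_ex) (use ex_state in blast)
  then have "valid_state ?t" by blast
  then show ?thesis using assms unfolding is_policy_def bpolicy_def by blast
qed

lemma pigeon_rec:
  fixes bs :: "nat \<Rightarrow> ('f::finite, 'v::finite) bstate"
  assumes "infinite K"
  shows "\<exists>k\<in>K. recurrent bs (bs k)"
proof -
  have "finite (bs ` K)" by simp
  from pigeonhole_infinite[OF assms this] obtain k where "k \<in> K" "infinite {a\<in>K. bs a = bs k}" by blast
  moreover have "{a\<in>K. bs a = bs k} \<subseteq> {i. bs i = bs k}" by blast
  ultimately show ?thesis unfolding recurrent_def using infinite_super by blast
qed

lemma eventually_rec:
  fixes bs :: "nat \<Rightarrow> ('f::finite, 'v::finite) bstate"
  shows "\<exists>N. \<forall>i\<ge>N. recurrent bs (bs i)"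
proof -
  have "finite {i. \<not> recurrent bs (bs i)}"
  proof (rule ccontr)
    assume "infinite {i. \<not> recurrent bs (bs i)}"
    from pigeon_rec[OF this] show False by auto
  qed
  then obtain k where "{i. \<not> recurrent bs (bs i)} \<subseteq> {..k}" unfolding finite_nat_iff_bounded_le by blast
  then have "\<forall>i\<ge>Suc k. recurrent bs (bs i)" by auto
  then show ?thesis by blast
qed

lemma nat_dist: "(a::nat) \<noteq> b \<Longrightarrow> 1 \<le> \<bar>real a - real b\<bar>"
proof (cases "a < b")
  case True
  then have "real a + 1 \<le> real b" by (metis Suc_leI of_nat_Suc of_nat_le_iff add.commute)
  then show ?thesis by linarith
next
  case False
  assume "a \<noteq> b"
  with False have "real b + 1 \<le> real a" by (metis Suc_leI of_nat_Suc of_nat_le_iff add.commute linorder_neqE_nat)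
  then show ?thesis by linarith
qed

lemma backward:
  fixes Q :: "('f::finite, 'v::finite) qnp"
    and \<pi> :: "('f, 'v) state \<Rightarrow> ('f, 'v) action option"
    and bs :: "nat \<Rightarrow> ('f, 'v) bstate"
  assumes wf: "wf_qnp Q" and pol: "is_policy Q \<pi>"
    and epos: "\<epsilon> > 0" and tr: "traj_Q Q \<pi> s" and et: "eps_traj \<epsilon> s"
    and bsd: "\<forall>i. bool_state (s i) = bs i"
  shows "traj_D Q \<pi> bs \<and> \<not> terminating_D \<pi> bs"
proof -
  obtain A where A: "\<And>i. \<pi> (s i) = Some (A i) \<and> applicable (A i) (s i) \<and> succ_Q (A i) (s i) (s (Suc i))"
    using tr unfolding traj_Q_def by metis
  have valid: "valid_state (s i)" for i
  proof (cases i)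
    case 0 then show ?thesis using tr by (simp add: traj_Q_def initial_state_def)
  next
    case (Suc j) then show ?thesis using A[of j] by (simp add: succ_Q_def)
  qed
  have bp: "bpolicy \<pi> (bs i) = Some (A i)" for i
    using bpolicy_eq[OF pol valid[of i]] A[of i] bsd by simp
  have fstbs: "fst (bs i) = fst (s i)" for i using bsd[rule_format, of i] by (auto simp: bool_state_def dest: sym)
  have sndbs: "snd (bs i) X = (snd (s i) X = 0)" for i X using bsd[rule_format, of i] by (auto simp: bool_state_def dest: sym)
  have trD: "traj_D Q \<pi> bs"
    unfolding traj_D_def
  proof (intro conjI allI)
    show "bs 0 = init_bstate Q" using tr bsd by (simp add: traj_Q_def initial_state_def)
    fix i
    show "\<exists>a. bpolicy \<pi> (bs i) = Some a \<and> holds_lits (bs i) (pre a) \<and> succ_D a (bs i) (bs (Suc i))"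
    proof (intro exI conjI)
      show "bpolicy \<pi> (bs i) = Some (A i)" by (rule bp)
      show "holds_lits (bs i) (pre (A i))" using A[of i] bsd by (simp add: applicable_def)
      have sq: "succ_Q (A i) (s i) (s (Suc i))" using A by blast
      have v0: "snd (s i) X \<ge> 0" for X using valid[of i] by (simp add: valid_state_def)
      show "succ_D (A i) (bs i) (bs (Suc i))"
        unfolding succ_D_def
      proof (intro conjI allI impI)
        show "fst (bs (Suc i)) = apply_eff (eff (A i)) (fst (bs i))" using sq fstbs by (simp add: succ_Q_def)
        fix X
        show "neff (A i) X = Some Inc \<Longrightarrow> \<not> snd (bs (Suc i)) X"
          using sq v0[of X] sndbs by (auto simp: succ_Q_def)
        show "neff (A i) X = None \<Longrightarrow> snd (bs (Suc i)) X = snd (bs i) X"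
          using sq sndbs by (auto simp: succ_Q_def)
      qed
    qed
  qed
  have "\<not> terminating_D \<pi> bs"
  proof
    assume "terminating_D \<pi> bs"
    then obtain X b a where rb: "recurrent bs b" and ba: "bpolicy \<pi> b = Some a" and aD: "neff a X = Some Dec"
      and noinc: "\<And>b' a'. recurrent bs b' \<Longrightarrow> bpolicy \<pi> b' = Some a' \<Longrightarrow> neff a' X \<noteq> Some Inc"
      unfolding terminating_D_def by blast
    obtain N where N: "\<And>i. i \<ge> N \<Longrightarrow> recurrent bs (bs i)" using eventually_rec by blast
    define x where "x i = snd (s i) X" for i
    have xnn: "x i \<ge> 0" for i using valid[of i] by (simp add: valid_state_def x_def)
    have mono1: "x (Suc i) \<le> x i" if "i \<ge> N" for i
    proof -
      have ni: "neff (A i) X \<noteq> Some Inc" using noinc[OF N[OF that] bp[of i]] .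
      have sq: "succ_Q (A i) (s i) (s (Suc i))" using A by blast
      show ?thesis
      proof (cases "neff (A i) X")
        case None then show ?thesis using sq by (simp add: succ_Q_def x_def)
      next
        case (Some e) then show ?thesis using sq ni by (cases e) (auto simp: succ_Q_def x_def)
      qed
    qed
    have monoj: "x j \<le> x i" if "N \<le> i" "i \<le> j" for i j
      using that(2)
    proof (induction j rule: dec_induct)
      case base then show ?case by simp
    next
      case (step j) then show ?case using mono1[of j] that(1) by linarith
    qed
    have preD: "GtZeroL X \<in> pre a" using wf bpolicy_ops[OF pol ba] aD by (simp add: wf_qnp_def)
    have occ: "\<exists>k\<ge>m. bs k = b" for m using rb unfolding recurrent_def infinite_nat_iff_unbounded_le by blast
    have atb: "A k = a \<and> x k > 0 \<and> x (Suc k) < x k" if "bs k = b" for k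
    proof -
      have Ak: "A k = a" using bp[of k] ba that by simp
      have "holds_lits (bs k) (pre a)" using A[of k] bsd Ak by (simp add: applicable_def)
      then have "\<not> snd (bs k) X" using preD by (auto simp: holds_lits_def)
      then have "x k \<noteq> 0" using sndbs by (simp add: x_def)
      moreover have "x (Suc k) < x k" using A[of k] Ak aD by (simp add: succ_Q_def x_def)
      ultimately show ?thesis using Ak xnn[of k] by simp
    qed
    have key: "\<exists>i\<ge>N. x i \<le> x N - real n * \<epsilon>" for n
    proof (induction n)
      case 0 then show ?case by auto
    next
      case (Suc n)
      then obtain i where i: "i \<ge> N" "x i \<le> x N - real n * \<epsilon>" by blast
      obtain k where k: "k \<ge> i" "bs k = b" using occ by blast
      obtain k' where k': "k' \<ge> Suc k" "bs k' = b" using occ by blast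
      have "x k' > 0" using atb[OF k'(2)] by simp
      moreover have "x k' \<le> x (Suc k)" using monoj[of "Suc k" k'] k' k i by simp
      ultimately have nz: "x (Suc k) \<noteq> 0" by simp
      have lt: "x (Suc k) < x k" using atb[OF k(2)] by simp
      have "\<bar>x (Suc k) - x k\<bar> \<ge> \<epsilon>" using et nz lt unfolding eps_traj_def x_def
        by (metis order_less_irrefl)
      then have "x (Suc k) \<le> x k - \<epsilon>" using lt by linarith
      moreover have "x k \<le> x i" using monoj[of i k] i k by simp
      ultimately have "x (Suc k) \<le> x N - real (Suc n) * \<epsilon>" using i by (simp add: algebra_simps)
      then show ?case using i k by (intro exI[of _ "Suc k"]) auto
    qed
    obtain n where n: "x N < real n * \<epsilon>" using reals_Archimedean3[OF epos] by blast
    obtain i where "x i \<le> x N - real n * \<epsilon>" using key by blast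
    then show False using n xnn[of i] by linarith
  qed
  with trD show ?thesis by blast
qed

lemma forward:
  fixes Q :: "('f::finite, 'v::finite) qnp"
    and \<pi> :: "('f, 'v) state \<Rightarrow> ('f, 'v) action option"
    and bs :: "nat \<Rightarrow> ('f, 'v) bstate"
  assumes wf: "wf_qnp Q" and pol: "is_policy Q \<pi>"
    and trD: "traj_D Q \<pi> bs" and nt: "\<not> terminating_D \<pi> bs"
  shows "\<exists>s. traj_Q Q \<pi> s \<and> eps_traj 1 s \<and> (\<forall>i. bool_state (s i) = bs i)"
proof -
  obtain A where A: "\<And>i. bpolicy \<pi> (bs i) = Some (A i) \<and> holds_lits (bs i) (pre (A i)) \<and> succ_D (A i) (bs i) (bs (Suc i))"
    using trD unfolding traj_D_def by metis
  have ex: "\<exists>v::nat\<Rightarrow>nat. \<forall>i. (v i = 0 \<longleftrightarrow> snd (bs i) X) \<and> (neff (A i) X = Some Inc \<longrightarrow> v i < v (Suc i)) \<and>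
           (neff (A i) X = Some Dec \<longrightarrow> v (Suc i) < v i) \<and>
           (\<not> neff (A i) X = Some Inc \<and> \<not> neff (A i) X = Some Dec \<longrightarrow> v (Suc i) = v i)" for X
  proof (rule abstract_values)
    fix i
    show "\<not> (neff (A i) X = Some Inc \<and> neff (A i) X = Some Dec)" by auto
    show "\<not> snd (bs i) X" if "neff (A i) X = Some Dec"
    proof -
      have "A i \<in> ops Q" using bpolicy_ops[OF pol] A[of i] by blast
      then have "GtZeroL X \<in> pre (A i)" using wf that by (simp add: wf_qnp_def)
      then show ?thesis using A[of i] by (auto simp: holds_lits_def)
    qed
    show "\<not> snd (bs (Suc i)) X" if "neff (A i) X = Some Inc" using A[of i] that by (simp add: succ_D_def)
    show "snd (bs (Suc i)) X = snd (bs i) X" if "neff (A i) X \<noteq> Some Inc" "neff (A i) X \<noteq> Some Dec"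
    proof -
      have "neff (A i) X = None" using that neffect.exhaust by (cases "neff (A i) X") auto
      then show ?thesis using A[of i] by (simp add: succ_D_def)
    qed
    assume inf: "infinite {k. neff (A k) X = Some Dec}"
    from pigeon_rec[OF inf] obtain k where k: "neff (A k) X = Some Dec" "recurrent bs (bs k)" by blast
    then obtain b' a' where b': "recurrent bs b'" "bpolicy \<pi> b' = Some a'" "neff a' X = Some Inc"
      using nt A[of k] unfolding terminating_D_def by blast
    then obtain j where j: "j \<ge> i" "bs j = b'" unfolding recurrent_def infinite_nat_iff_unbounded_le by blast
    then have "A j = a'" using A[of j] b'(2) by simp
    then show "\<exists>j\<ge>i. neff (A j) X = Some Inc" using j b' by blast
  qed
  define V where "V X = (SOME v::nat\<Rightarrow>nat. \<forall>i. (v i = 0 \<longleftrightarrow> snd (bs i) X) \<and> (neff (A i) X = Some Inc \<longrightarrow> v i < v (Suc i)) \<and>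
           (neff (A i) X = Some Dec \<longrightarrow> v (Suc i) < v i) \<and>
           (\<not> neff (A i) X = Some Inc \<and> \<not> neff (A i) X = Some Dec \<longrightarrow> v (Suc i) = v i))" for X
  have V0: "\<forall>i. (V X i = 0 \<longleftrightarrow> snd (bs i) X) \<and> (neff (A i) X = Some Inc \<longrightarrow> V X i < V X (Suc i)) \<and>
           (neff (A i) X = Some Dec \<longrightarrow> V X (Suc i) < V X i) \<and>
           (\<not> neff (A i) X = Some Inc \<and> \<not> neff (A i) X = Some Dec \<longrightarrow> V X (Suc i) = V X i)" for X
    unfolding V_def by (rule someI_ex[OF ex])
  note V = V0[rule_format]
  define s where "s i = (fst (bs i), \<lambda>X. real (V X i))" for i
  have valid: "valid_state (s i)" for i by (simp add: s_def valid_state_def)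
  have bsd: "bool_state (s i) = bs i" for i
  proof -
    have "(\<lambda>X. real (V X i) = 0) = snd (bs i)" using V by auto
    then show ?thesis by (simp add: s_def bool_state_def)
  qed
  have "traj_Q Q \<pi> s"
    unfolding traj_Q_def
  proof (intro conjI allI)
    show "initial_state Q (s 0)" using valid bsd trD by (simp add: initial_state_def traj_D_def)
    fix i
    show "\<exists>a. \<pi> (s i) = Some a \<and> applicable a (s i) \<and> succ_Q a (s i) (s (Suc i))"
    proof (intro exI conjI)
      show "\<pi> (s i) = Some (A i)" using bpolicy_eq[OF pol valid[of i]] bsd A by simp
      show "applicable (A i) (s i)" using bsd A by (simp add: applicable_def)
      show "succ_Q (A i) (s i) (s (Suc i))"
        unfolding succ_Q_def
      proof (intro conjI allI impI)
        show "valid_state (s (Suc i))" by (rule valid)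
        show "fst (s (Suc i)) = apply_eff (eff (A i)) (fst (s i))" using A[of i] by (simp add: s_def succ_D_def)
        fix X
        show "neff (A i) X = Some Inc \<Longrightarrow> snd (s i) X < snd (s (Suc i)) X" using V[of X i] by (simp add: s_def)
        show "neff (A i) X = Some Dec \<Longrightarrow> snd (s (Suc i)) X < snd (s i) X" using V[of X i] by (simp add: s_def)
        show "neff (A i) X = None \<Longrightarrow> snd (s (Suc i)) X = snd (s i) X" using V[of X i] by (simp add: s_def)
      qed
    qed
  qed
  moreover have "eps_traj 1 s"
    unfolding eps_traj_def
  proof (intro allI impI disjI1)
    fix X i
    assume "snd (s (Suc i)) X \<noteq> snd (s i) X"
    then show "\<bar>snd (s (Suc i)) X - snd (s i) X\<bar> \<ge> 1" by (simp add: s_def nat_dist)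
  qed
  ultimately show ?thesis using bsd by blast
qed

theorem theorem3:
  fixes Q :: "('f::finite, 'v::finite) qnp"
    and \<pi> :: "('f, 'v) state \<Rightarrow> ('f, 'v) action option"
    and bs :: "nat \<Rightarrow> ('f, 'v) bstate"
  assumes "wf_qnp Q"
    and "is_policy Q \<pi>"
  shows "(traj_D Q \<pi> bs \<and> \<not> terminating_D \<pi> bs) \<longleftrightarrow>
         (\<exists>\<epsilon>>0. \<exists>s. traj_Q Q \<pi> s \<and> eps_traj \<epsilon> s \<and> (\<forall>i. bool_state (s i) = bs i))"
proof
  assume "traj_D Q \<pi> bs \<and> \<not> terminating_D \<pi> bs"
  then obtain s where "traj_Q Q \<pi> s \<and> eps_traj 1 s \<and> (\<forall>i. bool_state (s i) = bs i)"
    using forward[OF assms] by blast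
  then show "\<exists>\<epsilon>>0. \<exists>s. traj_Q Q \<pi> s \<and> eps_traj \<epsilon> s \<and> (\<forall>i. bool_state (s i) = bs i)"
    by (intro exI[of _ "1::real"]) auto
next
  assume "\<exists>\<epsilon>>0. \<exists>s. traj_Q Q \<pi> s \<and> eps_traj \<epsilon> s \<and> (\<forall>i. bool_state (s i) = bs i)"
  then show "traj_D Q \<pi> bs \<and> \<not> terminating_D \<pi> bs" using backward[OF assms] by blast
qed

end
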